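(* For every integer $k$, there exists a strongly connected digraph $D$ with $\chi(D)>k$ that contains no $3$-spindle and no $(2+2)$-bispindle (as a subdigraph).
   Context: Digraphs are finite, without loops or parallel arcs (two opposite arcs $uv$, $vu$ are allowed). The chromatic number $\chi(D)$ of a digraph $D$ is the chromatic number of its underlying undirected graph. A digraph is strongly connected if for any two vertices $x,y$ there is a directed path from $x$ to $y$. For distinct vertices $x,y$, a $p$-spindle with tail $x$ and head $y$ is a union of $p$ pairwise internally vertex-disjoint directed paths from $x$ to $y$. A $(p+q)$-bispindle is the union of $p$ directed $(x,y)$-paths and $q$ directed $(y,x)$-paths for some distinct vertices $x,y$, all these $p+q$ directed paths being pairwise internally vertex-disjoint. *)

theory Defs
  imports Main
begin

definition digraph :: "'a set \<Rightarrow> ('a \<times> 'a) set \<Rightarrow> bool" where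
  "digraph V A \<longleftrightarrow> finite V \<and> A \<subseteq> V \<times> V \<and> (\<forall>v. (v, v) \<notin> A)"

definition colourable :: "'a set \<Rightarrow> ('a \<times> 'a) set \<Rightarrow> nat \<Rightarrow> bool" where
  "colourable V A k \<longleftrightarrow> (\<exists>c :: 'a \<Rightarrow> nat. c ` V \<subseteq> {..<k} \<and> (\<forall>(u, v) \<in> A. c u \<noteq> c v))"

definition chromatic_number :: "'a set \<Rightarrow> ('a \<times> 'a) set \<Rightarrow> nat" where
  "chromatic_number V A = (LEAST k. colourable V A k)"

definition strongly_connected :: "'a set \<Rightarrow> ('a \<times> 'a) set \<Rightarrow> bool" where
  "strongly_connected V A \<longleftrightarrow> (\<forall>x\<in>V. \<forall>y\<in>V. (x, y) \<in> A\<^sup>*)"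

definition dipath :: "('a \<times> 'a) set \<Rightarrow> 'a list \<Rightarrow> 'a \<Rightarrow> 'a \<Rightarrow> bool" where
  "dipath A P x y \<longleftrightarrow> length P \<ge> 2 \<and> distinct P \<and> hd P = x \<and> last P = y \<and>
     (\<forall>i. Suc i < length P \<longrightarrow> (P ! i, P ! Suc i) \<in> A)"

definition interior :: "'a list \<Rightarrow> 'a set" where
  "interior P = set (butlast (tl P))"

definition has_spindle :: "'a set \<Rightarrow> ('a \<times> 'a) set \<Rightarrow> nat \<Rightarrow> bool" where
  "has_spindle V A p \<longleftrightarrow> (\<exists>x\<in>V. \<exists>y\<in>V. \<exists>P :: nat \<Rightarrow> 'a list. x \<noteq> y \<and>
     (\<forall>i<p. dipath A (P i) x y) \<and>
     (\<forall>i<p. \<forall>j<p. i \<noteq> j \<longrightarrow> P i \<noteq> P j \<and> interior (P i) \<inter> interior (P j) = {}))"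

definition has_bispindle :: "'a set \<Rightarrow> ('a \<times> 'a) set \<Rightarrow> nat \<Rightarrow> nat \<Rightarrow> bool" where
  "has_bispindle V A p q \<longleftrightarrow> (\<exists>x\<in>V. \<exists>y\<in>V. \<exists>P :: nat \<Rightarrow> 'a list. x \<noteq> y \<and>
     (\<forall>i<p. dipath A (P i) x y) \<and> (\<forall>i. p \<le> i \<and> i < p + q \<longrightarrow> dipath A (P i) y x) \<and>
     (\<forall>i<p+q. \<forall>j<p+q. i \<noteq> j \<longrightarrow> P i \<noteq> P j \<and> interior (P i) \<inter> interior (P j) = {}))"

end

theory Submission
  imports Defs "HOL-Library.FuncSet"
begin



lemma dipath_len2: "dipath A P x y \<Longrightarrow> length P = 2 \<Longrightarrow> P = [x, y]"
  unfolding dipath_def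
  by (cases P; cases "tl P"; auto)

lemma dipath_nonempty: "dipath A P x y \<Longrightarrow> P \<noteq> []"
  unfolding dipath_def by auto

lemma dipath_nth0: "dipath A P x y \<Longrightarrow> P ! 0 = x"
  unfolding dipath_def by (cases P) auto

lemma dipath_nthlast: "dipath A P x y \<Longrightarrow> P ! (length P - 1) = y"
  unfolding dipath_def by (cases P) (auto simp: last_conv_nth)

lemma dipath_arc: "dipath A P x y \<Longrightarrow> Suc i < length P \<Longrightarrow> (P ! i, P ! Suc i) \<in> A"
  unfolding dipath_def by auto

lemma interior_nth: "0 < i \<Longrightarrow> i < length P - 1 \<Longrightarrow> P ! i \<in> interior P"
proof -
  assume a: "0 < i" "i < length P - 1"
  have "butlast (tl P) ! (i - 1) = P ! i"
    using a by (simp add: nth_butlast nth_tl)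
  moreover have "i - 1 < length (butlast (tl P))" using a by simp
  ultimately show ?thesis unfolding interior_def by (metis nth_mem)
qed

lemma interior_sub: "interior P \<subseteq> set P"
  unfolding interior_def by (cases P) (auto dest: in_set_butlastD)

lemma interior_mem:
  assumes "dipath A P x y" "z \<in> set P" "z \<noteq> x" "z \<noteq> y"
  shows "z \<in> interior P"
proof -
  obtain i where i: "i < length P" "P ! i = z" using assms(2) by (auto simp: in_set_conv_nth)
  have "i \<noteq> 0" using i assms dipath_nth0 by metis
  moreover have "i \<noteq> length P - 1" using i assms dipath_nthlast by metis
  moreover have "i < length P - 1" using i \<open>i \<noteq> length P - 1\<close> by linarith
  ultimately show ?thesis using i interior_nth[of i P] by simp
qed

lemma interior_map: "interior (map f P) = f ` interior P"
  unfolding interior_def by (simp add: map_tl[symmetric] map_butlast[symmetric])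

lemma second_distinct:
  assumes P: "dipath A P x y" and Q: "dipath A Q x y" and ne: "P \<noteq> Q"
    and dis: "interior P \<inter> interior Q = {}"
  shows "P ! 1 \<noteq> Q ! 1"
proof
  assume eq: "P ! 1 = Q ! 1"
  have dP: "distinct P" "length P \<ge> 2" and dQ: "distinct Q" "length Q \<ge> 2"
    using P Q unfolding dipath_def by auto
  show False
  proof (cases "length P = 2")
    case True
    then have "P ! 1 = y" using dipath_nthlast[OF P] by simp
    then have "Q ! 1 = Q ! (length Q - 1)" using eq dipath_nthlast[OF Q] by simp
    moreover have a: "1 < length Q" "length Q - 1 < length Q" using dQ by auto
    ultimately have "1 = length Q - 1" using nth_eq_iff_index_eq[OF dQ(1) a] by simp
    then have "length Q = 2" using dQ by linarith
    then show False using ne True dipath_len2 P Q by metis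
  next
    case False
    then have "P ! 1 \<in> interior P" using dP by (intro interior_nth) auto
    have a: "1 < length P" "length P - 1 < length P" using dP by auto
    have "P ! 1 \<noteq> y"
      using False dP dipath_nthlast[OF P] nth_eq_iff_index_eq[OF dP(1) a] by simp
    then have "length Q \<noteq> 2" using eq dipath_nthlast[OF Q] by (metis One_nat_def Suc_1 diff_Suc_1)
    then have "Q ! 1 \<in> interior Q" using dQ by (intro interior_nth) auto
    then show False using dis eq \<open>P ! 1 \<in> interior P\<close> by auto
  qed
qed

lemma penult_distinct:
  assumes P: "dipath A P x y" and Q: "dipath A Q x y" and ne: "P \<noteq> Q"
    and dis: "interior P \<inter> interior Q = {}"
  shows "P ! (length P - 2) \<noteq> Q ! (length Q - 2)"
proof
  assume eq: "P ! (length P - 2) = Q ! (length Q - 2)"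
  have dP: "distinct P" "length P \<ge> 2" and dQ: "distinct Q" "length Q \<ge> 2"
    using P Q unfolding dipath_def by auto
  show False
  proof (cases "length P = 2")
    case True
    then have "P ! (length P - 2) = x" using dipath_nth0[OF P] by simp
    then have "Q ! (length Q - 2) = Q ! 0" using eq dipath_nth0[OF Q] by simp
    moreover have a: "length Q - 2 < length Q" "0 < length Q" using dQ by auto
    ultimately have "length Q - 2 = 0" using nth_eq_iff_index_eq[OF dQ(1) a] by simp
    then have "length Q = 2" using dQ by linarith
    then show False using ne True dipath_len2 P Q by metis
  next
    case False
    then have "P ! (length P - 2) \<in> interior P" using dP by (intro interior_nth) auto
    have a: "length P - 2 < length P" "0 < length P" using dP by auto
    have "P ! (length P - 2) \<noteq> x"
      using False dP dipath_nth0[OF P] nth_eq_iff_index_eq[OF dP(1) a] by simp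
    then have "length Q \<noteq> 2" using eq dipath_nth0[OF Q] by (metis diff_self_eq_0)
    then have "Q ! (length Q - 2) \<in> interior Q" using dQ by (intro interior_nth) auto
    then show False using dis eq \<open>P ! (length P - 2) \<in> interior P\<close> by auto
  qed
qed

lemma dipath_first_arc: "dipath A P x y \<Longrightarrow> (x, P ! 1) \<in> A"
  using dipath_arc[of A P x y 0] dipath_nth0[of A P x y] unfolding dipath_def by auto

lemma dipath_last_arc: assumes d: "dipath A P x y" shows "(P ! (length P - 2), y) \<in> A"
proof -
  have L: "length P \<ge> 2" using d unfolding dipath_def by auto
  then have a: "Suc (length P - 2) < length P" "Suc (length P - 2) = length P - 1" by arith+
  show ?thesis using dipath_arc[OF d a(1)] a(2) dipath_nthlast[OF d] by simp
qed

lemma dipath_set: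
  assumes "dipath B P x y" "B \<subseteq> W \<times> W" shows "set P \<subseteq> W"
proof
  fix z assume "z \<in> set P"
  then obtain i where i: "i < length P" "P ! i = z" by (auto simp: in_set_conv_nth)
  have L: "length P \<ge> 2" using assms unfolding dipath_def by auto
  show "z \<in> W"
  proof (cases "Suc i < length P")
    case True then show ?thesis using dipath_arc[OF assms(1) True] assms(2) i by auto
  next
    case False
    then obtain j where j: "i = Suc j" using i L by (cases i) auto
    then have "(P ! j, P ! i) \<in> B" using dipath_arc[OF assms(1), of j] i by simp
    then show ?thesis using assms(2) i by auto
  qed
qed

lemma dipath_pull:
  assumes d: "dipath B P x y" and sW: "set P \<subseteq> W" and ij: "inj_on p W"
    and ar: "\<And>u v. u \<in> W \<Longrightarrow> v \<in> W \<Longrightarrow> (u, v) \<in> B \<Longrightarrow> (p u, p v) \<in> A"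
  shows "dipath A (map p P) (p x) (p y)"
proof -
  have ne: "P \<noteq> []" using dipath_nonempty[OF d] .
  have dd: "distinct P" "length P \<ge> 2" "hd P = x" "last P = y" using d unfolding dipath_def by auto
  have ij2: "inj_on p (set P)" using inj_on_subset[OF ij sW] .
  have 1: "distinct (map p P)" using dd(1) ij2 by (simp add: distinct_map)
  have 2: "\<forall>i. Suc i < length (map p P) \<longrightarrow> (map p P ! i, map p P ! Suc i) \<in> A"
  proof (intro allI impI)
    fix i assume "Suc i < length (map p P)"
    then have i: "Suc i < length P" by simp
    have w1: "P ! i \<in> W" using sW i nth_mem[of i P] by auto
    have w2: "P ! Suc i \<in> W" using sW i nth_mem[of "Suc i" P] by auto
    have "(p (P ! i), p (P ! Suc i)) \<in> A" by (rule ar[OF w1 w2 dipath_arc[OF d i]])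
    then show "(map p P ! i, map p P ! Suc i) \<in> A" using i by simp
  qed
  have 3: "hd (map p P) = p x" "last (map p P) = p y" using ne dd by (simp_all add: hd_map last_map)
  show ?thesis unfolding dipath_def using 1 2 3 dd(2) by simp
qed

lemma map_pull_ne:
  "set P \<subseteq> W \<Longrightarrow> set Q \<subseteq> W \<Longrightarrow> inj_on p W \<Longrightarrow> P \<noteq> Q \<Longrightarrow> map p P \<noteq> map p Q"
  by (metis inj_on_map_eq_map inj_on_subset sup.bounded_iff)

lemma map_pull_dis:
  "set P \<subseteq> W \<Longrightarrow> set Q \<subseteq> W \<Longrightarrow> inj_on p W \<Longrightarrow> interior P \<inter> interior Q = {}
   \<Longrightarrow> interior (map p P) \<inter> interior (map p Q) = {}"
  unfolding interior_map
  by (metis image_empty inj_on_image_Int interior_sub order_trans)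




definition no2sp :: "('a \<times> 'a) set \<Rightarrow> bool" where
  "no2sp A \<longleftrightarrow> (\<forall>P Q x y. dipath A P x y \<longrightarrow> dipath A Q x y \<longrightarrow> P \<noteq> Q \<longrightarrow>
      interior P \<inter> interior Q \<noteq> {})"

lemma colourable_mono: assumes "colourable V A j" "j \<le> j'" shows "colourable V A j'"
proof -
  obtain c :: "'a \<Rightarrow> nat" where c: "c ` V \<subseteq> {..<j}" "\<forall>(u, v) \<in> A. c u \<noteq> c v"
    using assms(1) unfolding colourable_def by blast
  have "{..<j} \<subseteq> {..<j'}" using assms(2) by simp
  then have "c ` V \<subseteq> {..<j'}" using c(1) by (rule order_trans[rotated])
  then show ?thesis unfolding colourable_def using c(2) by (intro exI[of _ c] conjI)
qed

context
  fixes h :: "'a \<Rightarrow> 'b" and V :: "'a set" and A :: "('a \<times> 'a) set"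
  assumes inj: "inj_on h V" and dg: "digraph V A"
begin

private abbreviation "A' \<equiv> map_prod h h ` A"
private abbreviation "p \<equiv> inv_into V h"

private lemma AV: "A \<subseteq> V \<times> V" using dg unfolding digraph_def by auto

private lemma A'W: "A' \<subseteq> h ` V \<times> h ` V" using AV by auto

private lemma injp: "inj_on p (h ` V)" by (simp add: inj_on_inv_into)

private lemma arcp: "u \<in> h ` V \<Longrightarrow> v \<in> h ` V \<Longrightarrow> (u, v) \<in> A' \<Longrightarrow> (p u, p v) \<in> A"
proof -
  assume "(u, v) \<in> A'"
  then obtain a b where ab: "(a, b) \<in> A" "u = h a" "v = h b" by auto
  then have "a \<in> V" "b \<in> V" using AV by auto
  then show ?thesis using ab inj by (simp add: inv_into_f_f)
qed

private lemma pullpath: "dipath A' P x y \<Longrightarrow> dipath A (map p P) (p x) (p y) \<and> set P \<subseteq> h ` V"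
proof -
  assume d: "dipath A' P x y"
  have s: "set P \<subseteq> h ` V" using dipath_set[OF d A'W] .
  show ?thesis using dipath_pull[OF d s injp arcp] s by simp
qed

lemma tr_digraph: "digraph (h ` V) A'"
proof -
  have "(u, u) \<notin> A'" for u
  proof
    assume "(u, u) \<in> A'"
    then obtain a b where ab: "(a, b) \<in> A" "u = h a" "u = h b" by auto
    then have "a \<in> V" "b \<in> V" using AV by auto
    then have "a = b" using ab inj by (metis inj_on_contraD)
    then show False using ab dg unfolding digraph_def by auto
  qed
  then show ?thesis using dg A'W unfolding digraph_def by auto
qed

lemma tr_col: "colourable (h ` V) A' j \<Longrightarrow> colourable V A j"
  unfolding colourable_def
proof -
  assume "\<exists>c. c ` h ` V \<subseteq> {..<j} \<and> (\<forall>(u, v)\<in>A'. c u \<noteq> c v)"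
  then obtain c where c: "c ` h ` V \<subseteq> {..<j}" "\<forall>(u, v)\<in>A'. c u \<noteq> c v" by blast
  have "(c \<circ> h) ` V \<subseteq> {..<j}" using c(1) by auto
  moreover have "\<forall>(u, v)\<in>A. (c \<circ> h) u \<noteq> (c \<circ> h) v" using c(2) by auto
  ultimately show "\<exists>c. c ` V \<subseteq> {..<j} \<and> (\<forall>(u, v)\<in>A. c u \<noteq> c v)" by blast
qed

lemma tr_no2sp: "no2sp A \<Longrightarrow> no2sp A'"
  unfolding no2sp_def
proof (intro allI impI)
  fix P Q x y
  assume n: "\<forall>P Q x y. dipath A P x y \<longrightarrow> dipath A Q x y \<longrightarrow> P \<noteq> Q \<longrightarrow> interior P \<inter> interior Q \<noteq> {}"
    and P: "dipath A' P x y" and Q: "dipath A' Q x y" and ne: "P \<noteq> Q"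
  show "interior P \<inter> interior Q \<noteq> {}"
  proof
    assume d: "interior P \<inter> interior Q = {}"
    have a: "dipath A (map p P) (p x) (p y)" "set P \<subseteq> h ` V" using pullpath[OF P] by auto
    have b: "dipath A (map p Q) (p x) (p y)" "set Q \<subseteq> h ` V" using pullpath[OF Q] by auto
    show False using n a(1) b(1) map_pull_ne[OF a(2) b(2) injp ne] map_pull_dis[OF a(2) b(2) injp d] by auto
  qed
qed

lemma tr_strong: "strongly_connected V A \<Longrightarrow> strongly_connected (h ` V) A'"
  unfolding strongly_connected_def
proof (intro ballI)
  fix u v assume s: "\<forall>x\<in>V. \<forall>y\<in>V. (x, y) \<in> A\<^sup>*" and u: "u \<in> h ` V" and v: "v \<in> h ` V"
  obtain a b where "a \<in> V" "b \<in> V" "u = h a" "v = h b" using u v by auto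
  moreover have "(x, y) \<in> A\<^sup>* \<Longrightarrow> (h x, h y) \<in> A'\<^sup>*" for x y
  proof (induction rule: rtrancl_induct)
    case base then show ?case by simp
  next
    case (step y z)
    then have "(h y, h z) \<in> A'" by force
    then show ?case using step.IH by (meson rtrancl.rtrancl_into_rtrancl)
  qed
  ultimately show "(u, v) \<in> A'\<^sup>*" using s by auto
qed

lemma tr_spindle: "has_spindle (h ` V) A' q \<Longrightarrow> has_spindle V A q"
  unfolding has_spindle_def
proof -
  assume "\<exists>x\<in>h ` V. \<exists>y\<in>h ` V. \<exists>P. x \<noteq> y \<and> (\<forall>i<q. dipath A' (P i) x y) \<and>
      (\<forall>i<q. \<forall>j<q. i \<noteq> j \<longrightarrow> P i \<noteq> P j \<and> interior (P i) \<inter> interior (P j) = {})"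
  then obtain x y P where xy: "x \<in> h ` V" "y \<in> h ` V" "x \<noteq> y"
    and pa: "\<forall>i<q. dipath A' (P i) x y"
    and di: "\<forall>i<q. \<forall>j<q. i \<noteq> j \<longrightarrow> P i \<noteq> P j \<and> interior (P i) \<inter> interior (P j) = {}"
    by blast
  have 1: "p x \<in> V" "p y \<in> V" using xy by (auto intro: inv_into_into)
  have 2: "p x \<noteq> p y" by (rule inj_on_contraD[OF injp xy(3) xy(1) xy(2)])
  have 3: "\<forall>i<q. dipath A (map p (P i)) (p x) (p y) \<and> set (P i) \<subseteq> h ` V"
  proof (intro allI impI)
    fix i assume "i < q"
    show "dipath A (map p (P i)) (p x) (p y) \<and> set (P i) \<subseteq> h ` V"
      using pullpath[OF pa[rule_format, OF \<open>i < q\<close>]] .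
  qed
  have 4: "\<forall>i<q. \<forall>j<q. i \<noteq> j \<longrightarrow> map p (P i) \<noteq> map p (P j) \<and>
      interior (map p (P i)) \<inter> interior (map p (P j)) = {}"
  proof (intro allI impI)
    fix i j assume ij: "i < q" "j < q" "i \<noteq> j"
    have a: "set (P i) \<subseteq> h ` V" "set (P j) \<subseteq> h ` V" using 3 ij by auto
    have b: "P i \<noteq> P j" "interior (P i) \<inter> interior (P j) = {}" using di ij by auto
    show "map p (P i) \<noteq> map p (P j) \<and> interior (map p (P i)) \<inter> interior (map p (P j)) = {}"
      using map_pull_ne[OF a injp b(1)] map_pull_dis[OF a injp b(2)] by simp
  qed
  show "\<exists>x\<in>V. \<exists>y\<in>V. \<exists>P. x \<noteq> y \<and> (\<forall>i<q. dipath A (P i) x y) \<and>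
      (\<forall>i<q. \<forall>j<q. i \<noteq> j \<longrightarrow> P i \<noteq> P j \<and> interior (P i) \<inter> interior (P j) = {})"
    apply (rule bexI[OF _ 1(1)], rule bexI[OF _ 1(2)], rule exI[of _ "\<lambda>i. map p (P i)"])
    using 2 3 4 by simp
qed

lemma tr_bispindle: "has_bispindle (h ` V) A' q r \<Longrightarrow> has_bispindle V A q r"
  unfolding has_bispindle_def
proof -
  assume "\<exists>x\<in>h ` V. \<exists>y\<in>h ` V. \<exists>P. x \<noteq> y \<and> (\<forall>i<q. dipath A' (P i) x y) \<and>
      (\<forall>i. q \<le> i \<and> i < q + r \<longrightarrow> dipath A' (P i) y x) \<and>
      (\<forall>i<q + r. \<forall>j<q + r. i \<noteq> j \<longrightarrow> P i \<noteq> P j \<and> interior (P i) \<inter> interior (P j) = {})"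
  then obtain x y P where xy: "x \<in> h ` V" "y \<in> h ` V" "x \<noteq> y"
    and pa: "\<forall>i<q. dipath A' (P i) x y"
    and pb: "\<forall>i. q \<le> i \<and> i < q + r \<longrightarrow> dipath A' (P i) y x"
    and di: "\<forall>i<q+r. \<forall>j<q+r. i \<noteq> j \<longrightarrow> P i \<noteq> P j \<and> interior (P i) \<inter> interior (P j) = {}"
    by blast
  have 1: "p x \<in> V" "p y \<in> V" using xy by (auto intro: inv_into_into)
  have 2: "p x \<noteq> p y" by (rule inj_on_contraD[OF injp xy(3) xy(1) xy(2)])
  have 3: "\<forall>i<q. dipath A (map p (P i)) (p x) (p y) \<and> set (P i) \<subseteq> h ` V"
  proof (intro allI impI)
    fix i assume "i < q"
    show "dipath A (map p (P i)) (p x) (p y) \<and> set (P i) \<subseteq> h ` V"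
      using pullpath[OF pa[rule_format, OF \<open>i < q\<close>]] .
  qed
  have ppb: "\<forall>i. q \<le> i \<and> i < q + r \<longrightarrow> dipath A (map p (P i)) (p y) (p x) \<and> set (P i) \<subseteq> h ` V"
  proof (intro allI impI)
    fix i assume a: "q \<le> i \<and> i < q + r"
    show "dipath A (map p (P i)) (p y) (p x) \<and> set (P i) \<subseteq> h ` V"
      using pullpath[OF pb[rule_format, OF a]] .
  qed
  have 5: "\<forall>i<q+r. set (P i) \<subseteq> h ` V"
  proof (intro allI impI)
    fix i assume "i < q + r"
    then show "set (P i) \<subseteq> h ` V" using 3 ppb by (cases "i < q") auto
  qed
  have 4: "\<forall>i<q+r. \<forall>j<q+r. i \<noteq> j \<longrightarrow> map p (P i) \<noteq> map p (P j) \<and>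
      interior (map p (P i)) \<inter> interior (map p (P j)) = {}"
  proof (intro allI impI)
    fix i j assume "i < q + r" "j < q + r" "i \<noteq> j"
    then show "map p (P i) \<noteq> map p (P j) \<and> interior (map p (P i)) \<inter> interior (map p (P j)) = {}"
    proof -
      have a: "set (P i) \<subseteq> h ` V" "set (P j) \<subseteq> h ` V" using 5 \<open>i < q + r\<close> \<open>j < q + r\<close> by auto
      have b: "P i \<noteq> P j" "interior (P i) \<inter> interior (P j) = {}"
        using di \<open>i < q + r\<close> \<open>j < q + r\<close> \<open>i \<noteq> j\<close> by auto
      show ?thesis using map_pull_ne[OF a injp b(1)] map_pull_dis[OF a injp b(2)] by simp
    qed
  qed
  show "\<exists>x\<in>V. \<exists>y\<in>V. \<exists>P. x \<noteq> y \<and> (\<forall>i<q. dipath A (P i) x y) \<and>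
      (\<forall>i. q \<le> i \<and> i < q + r \<longrightarrow> dipath A (P i) y x) \<and>
      (\<forall>i<q+r. \<forall>j<q+r. i \<noteq> j \<longrightarrow> P i \<noteq> P j \<and> interior (P i) \<inter> interior (P j) = {})"
    apply (rule bexI[OF _ 1(1)], rule bexI[OF _ 1(2)], rule exI[of _ "\<lambda>i. map p (P i)"])
    using 2 3 ppb 4 by simp
qed

end

lemma to_nat:
  fixes V :: "'a set"
  assumes "finite V"
  obtains h :: "'a \<Rightarrow> nat" where "inj_on h V"
  using finite_imp_inj_to_nat_seg[OF assms] by blast




type_synonym sv = "nat + (nat \<Rightarrow> nat) \<times> nat"

definition stG :: "nat set \<Rightarrow> nat \<Rightarrow> (nat \<Rightarrow> nat) set" where
  "stG V N = {g. g \<in> V \<rightarrow>\<^sub>E {..<N} \<and> inj_on g V}"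

definition stV :: "nat set \<Rightarrow> nat \<Rightarrow> sv set" where
  "stV V N = Inl ` {..<N} \<union> Inr ` (stG V N \<times> V)"

definition stA :: "nat set \<Rightarrow> (nat \<times> nat) set \<Rightarrow> nat \<Rightarrow> (sv \<times> sv) set" where
  "stA V A N = {(Inr (g, u), Inr (g, v)) | g u v. g \<in> stG V N \<and> (u, v) \<in> A}
      \<union> {(Inr (g, v), Inl (g v)) | g v. g \<in> stG V N \<and> v \<in> V}"

lemma stA_cases:
  assumes "(a, b) \<in> stA V A N"
  obtains (in_copy) g u v where "a = Inr (g, u)" "b = Inr (g, v)" "g \<in> stG V N" "(u, v) \<in> A"
    | (to_S) g v where "a = Inr (g, v)" "b = Inl (g v)" "g \<in> stG V N" "v \<in> V"
  using assms unfolding stA_def by auto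

lemma stA_I1: "g \<in> stG V N \<Longrightarrow> (u, v) \<in> A \<Longrightarrow> (Inr (g, u), Inr (g, v)) \<in> stA V A N"
  unfolding stA_def by auto

lemma stA_I2: "g \<in> stG V N \<Longrightarrow> v \<in> V \<Longrightarrow> (Inr (g, v), Inl (g v)) \<in> stA V A N"
  unfolding stA_def by auto

lemma stA_Inl: "(Inl s, b) \<notin> stA V A N"
  unfolding stA_def by auto

lemma step_digraph:
  assumes dg: "digraph V A" shows "digraph (stV V N) (stA V A N)"
proof -
  have fV: "finite V" and AV: "A \<subseteq> V \<times> V" and nl: "\<forall>v. (v, v) \<notin> A"
    using dg unfolding digraph_def by auto
  have "stG V N \<subseteq> V \<rightarrow>\<^sub>E {..<N}" unfolding stG_def by auto
  moreover have "finite (V \<rightarrow>\<^sub>E {..<N})" using fV by (intro finite_PiE) auto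
  ultimately have "finite (stG V N)" by (rule finite_subset)
  then have f: "finite (stV V N)" unfolding stV_def using fV by auto
  have s: "stA V A N \<subseteq> stV V N \<times> stV V N"
  proof
    fix e assume "e \<in> stA V A N"
    then obtain a b where e: "e = (a, b)" "(a, b) \<in> stA V A N" by (cases e) auto
    from e(2) show "e \<in> stV V N \<times> stV V N"
    proof (cases rule: stA_cases)
      case (in_copy g u v)
      then have "u \<in> V" "v \<in> V" using AV by auto
      then show ?thesis using in_copy e(1) unfolding stV_def by auto
    next
      case (to_S g v)
      then have "g v \<in> {..<N}" unfolding stG_def using PiE_mem by blast
      then show ?thesis using to_S e(1) unfolding stV_def by auto
    qed
  qed
  have l: "\<forall>v. (v, v) \<notin> stA V A N"
  proof (intro allI notI)
    fix v assume "(v, v) \<in> stA V A N"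
    then show False
    proof (cases rule: stA_cases)
      case (in_copy g u w)
      then show False using nl by auto
    next
      case (to_S g w) then show False by auto
    qed
  qed
  show ?thesis unfolding digraph_def using f s l by auto
qed

lemma step_col:
  assumes dg: "digraph V A" and nc: "\<not> colourable V A k" and N: "N = Suc k * card V"
  shows "\<not> colourable (stV V N) (stA V A N) (Suc k)"
proof
  assume "colourable (stV V N) (stA V A N) (Suc k)"
  then obtain c :: "sv \<Rightarrow> nat" where c1: "c ` stV V N \<subseteq> {..<Suc k}"
    and c2: "\<forall>(a, b) \<in> stA V A N. c a \<noteq> c b"
    unfolding colourable_def by blast
  have fV: "finite V" and AV: "A \<subseteq> V \<times> V" using dg unfolding digraph_def by auto
  have Vne: "V \<noteq> {}"
  proof
    assume "V = {}"
    then have "A = {}" using AV by auto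
    then have "colourable V A k" unfolding colourable_def using \<open>V = {}\<close> by auto
    then show False using nc by simp
  qed
  define n where "n = card V"
  have n1: "n \<ge> 1" using Vne fV n_def by (simp add: Suc_leI card_gt_0_iff)
  define C where "C i = {s \<in> {..<N}. c (Inl s) = i}" for i
  have cover: "{..<N} \<subseteq> (\<Union>i<Suc k. C i)"
  proof
    fix s assume s: "s \<in> {..<N}"
    then have "Inl s \<in> stV V N" unfolding stV_def by auto
    then have "c (Inl s) < Suc k" using c1 by auto
    then show "s \<in> (\<Union>i<Suc k. C i)" using s unfolding C_def by auto
  qed
  have fC: "finite (C i)" for i unfolding C_def by auto
  have "\<exists>i<Suc k. n \<le> card (C i)"
  proof (rule ccontr)
    assume "\<not> (\<exists>i<Suc k. n \<le> card (C i))"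
    then have lt: "\<And>i. i \<in> {..<Suc k} \<Longrightarrow> card (C i) \<le> n - 1" by force
    have "N = card {..<N}" by simp
    also have "\<dots> \<le> card (\<Union>i<Suc k. C i)" using cover fC by (intro card_mono) auto
    also have "\<dots> \<le> (\<Sum>i<Suc k. card (C i))" by (rule card_UN_le) simp
    also have "\<dots> \<le> of_nat (card {..<Suc k}) * (n - 1)" by (rule sum_bounded_above) (rule lt)
    also have "\<dots> = Suc k * (n - 1)" by simp
    finally have "N \<le> Suc k * (n - 1)" .
    moreover have "Suc k * (n - 1) < Suc k * n" using n1 by (intro mult_strict_left_mono) auto
    ultimately show False using N n_def by simp
  qed
  then obtain i where i: "i < Suc k" "n \<le> card (C i)" by blast
  obtain f where f: "f ` V \<subseteq> C i" "inj_on f V"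
    using card_le_inj[OF fV fC[of i]] i(2) n_def by auto
  define g where "g = restrict f V"
  have gv: "v \<in> V \<Longrightarrow> g v = f v" for v unfolding g_def by simp
  have gG: "g \<in> stG V N"
  proof -
    have "\<forall>v\<in>V. f v \<in> {..<N}" using f(1) unfolding C_def by auto
    then have "g \<in> V \<rightarrow>\<^sub>E {..<N}" unfolding g_def by (simp add: restrict_PiE_iff)
    moreover have "inj_on g V" using f(2) gv unfolding inj_on_def by auto
    ultimately show ?thesis unfolding stG_def by simp
  qed
  define c' where "c' v = c (Inr (g, v))" for v
  have c'1: "c' v < Suc k" if "v \<in> V" for v
  proof -
    have "Inr (g, v) \<in> stV V N" using gG that unfolding stV_def by auto
    then show ?thesis using c1 unfolding c'_def by auto
  qed
  have c'2: "c' v \<noteq> i" if v: "v \<in> V" for v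
  proof -
    have "(Inr (g, v), Inl (g v)) \<in> stA V A N" by (rule stA_I2[OF gG v])
    then have "c (Inr (g, v)) \<noteq> c (Inl (g v))" using c2 by auto
    moreover have "g v \<in> C i" using f(1) gv v by auto
    then have "c (Inl (g v)) = i" unfolding C_def by simp
    ultimately show ?thesis unfolding c'_def by simp
  qed
  define c'' where "c'' v = (if c' v < i then c' v else c' v - 1)" for v
  have "c'' ` V \<subseteq> {..<k}"
  proof
    fix z assume "z \<in> c'' ` V"
    then obtain v where v: "v \<in> V" "z = c'' v" by auto
    show "z \<in> {..<k}" using c'1[OF v(1)] c'2[OF v(1)] i(1) v(2) unfolding c''_def by auto
  qed
  moreover have "\<forall>(u, v) \<in> A. c'' u \<noteq> c'' v"
  proof (intro ballI)
    fix e assume e: "e \<in> A"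
    obtain u v where uv: "e = (u, v)" by (cases e)
    have uvV: "u \<in> V" "v \<in> V" using e uv AV by auto
    have "(Inr (g, u), Inr (g, v)) \<in> stA V A N" using stA_I1[OF gG] e uv by simp
    then have "c' u \<noteq> c' v" using c2 unfolding c'_def by auto
    then have "c'' u \<noteq> c'' v" using c'2[OF uvV(1)] c'2[OF uvV(2)] unfolding c''_def by auto
    then show "case e of (u, v) \<Rightarrow> c'' u \<noteq> c'' v" using uv by simp
  qed
  ultimately have "colourable V A k" unfolding colourable_def by (intro exI[of _ c''] conjI)
  then show False using nc by simp
qed

lemma step_path:
  assumes d: "dipath (stA V A N) P x y"
  obtains g x0 where "x = Inr (g, x0)" "g \<in> stG V N"
    "\<forall>i. Suc i < length P \<longrightarrow> (\<exists>v. P ! i = Inr (g, v))"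
proof -
  have "(x, P ! 1) \<in> stA V A N" by (rule dipath_first_arc[OF d])
  then obtain g x0 where gx: "x = Inr (g, x0)" "g \<in> stG V N"
    by (cases rule: stA_cases) auto
  have "\<forall>i. Suc i < length P \<longrightarrow> (\<exists>v. P ! i = Inr (g, v))"
  proof (intro allI)
    fix i show "Suc i < length P \<longrightarrow> (\<exists>v. P ! i = Inr (g, v))"
    proof (induction i)
      case 0 then show ?case using dipath_nth0[OF d] gx by auto
    next
      case (Suc i)
      show ?case
      proof
        assume l: "Suc (Suc i) < length P"
        then obtain v where v: "P ! i = Inr (g, v)" using Suc.IH by auto
        have a1: "(P ! i, P ! Suc i) \<in> stA V A N" using dipath_arc[OF d] l by simp
        have a2: "(P ! Suc i, P ! Suc (Suc i)) \<in> stA V A N" using dipath_arc[OF d l] .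
        from a1 show "\<exists>w. P ! Suc i = Inr (g, w)"
        proof (cases rule: stA_cases)
          case (in_copy g' u w) then show ?thesis using v by auto
        next
          case (to_S g' w) then show ?thesis using a2 stA_Inl by metis
        qed
      qed
    qed
  qed
  then show ?thesis using that gx by simp
qed

lemma step_no2sp:
  assumes n: "no2sp A" shows "no2sp (stA V A N)"
  unfolding no2sp_def
proof (intro allI impI)
  fix P Q x y
  assume P: "dipath (stA V A N) P x y" and Q: "dipath (stA V A N) Q x y" and ne: "P \<noteq> Q"
  show "interior P \<inter> interior Q \<noteq> {}"
  proof
    assume d: "interior P \<inter> interior Q = {}"
    obtain g x0 where gx: "x = Inr (g, x0)" "g \<in> stG V N"
      and pP: "\<forall>i. Suc i < length P \<longrightarrow> (\<exists>v. P ! i = Inr (g, v))"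
      by (rule step_path[OF P])
    obtain g'' x0'' where gx'': "x = Inr (g'', x0'')" and "g'' \<in> stG V N"
      and pQ'': "\<forall>i. Suc i < length Q \<longrightarrow> (\<exists>v. Q ! i = Inr (g'', v))"
      by (rule step_path[OF Q])
    have "g'' = g" using gx gx'' by simp
    then have pQ: "\<forall>i. Suc i < length Q \<longrightarrow> (\<exists>v. Q ! i = Inr (g, v))" using pQ'' by simp
    have lP: "length P \<ge> 2" and lQ: "length Q \<ge> 2" using P Q unfolding dipath_def by auto
    have sP: "Suc (length P - 2) < length P" using lP by arith
    have sQ: "Suc (length Q - 2) < length Q" using lQ by arith
    obtain u where u: "P ! (length P - 2) = Inr (g, u)" using pP sP by blast
    obtain w where w: "Q ! (length Q - 2) = Inr (g, w)" using pQ sQ by blast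
    have aP: "(Inr (g, u), y) \<in> stA V A N" using dipath_last_arc[OF P] u by simp
    have aQ: "(Inr (g, w), y) \<in> stA V A N" using dipath_last_arc[OF Q] w by simp
    show False
    proof (cases y)
      case (Inl s)
      have u2: "s = g u" "u \<in> V" using aP Inl unfolding stA_def by auto
      have w2: "s = g w" "w \<in> V" using aQ Inl unfolding stA_def by auto
      have "inj_on g V" using gx(2) unfolding stG_def by simp
      then have "u = w" using u2 w2 by (metis inj_on_contraD)
      then show False using penult_distinct[OF P Q ne d] u w by simp
    next
      case (Inr yy)
      define W :: "sv set" where "W = Inr ` ({g} \<times> UNIV)"
      define pr where "pr z = snd (projr z)" for z :: sv
      have yW: "y \<in> W"
        using aP Inr by (cases rule: stA_cases) (auto simp: W_def)
      have setW: "set R \<subseteq> W" if R: "dipath (stA V A N) R x y"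
        and pR: "\<forall>i. Suc i < length R \<longrightarrow> (\<exists>v. R ! i = Inr (g, v))" for R
      proof
        fix z assume "z \<in> set R"
        then obtain i where i: "i < length R" "R ! i = z" by (auto simp: in_set_conv_nth)
        show "z \<in> W"
        proof (cases "Suc i < length R")
          case True then show ?thesis using pR i unfolding W_def by auto
        next
          case False
          then have "i = length R - 1" using i by simp
          then show ?thesis using dipath_nthlast[OF R] yW i by simp
        qed
      qed
      have PW: "set P \<subseteq> W" by (rule setW[OF P pP])
      have QW: "set Q \<subseteq> W" by (rule setW[OF Q pQ])
      have ij: "inj_on pr W" unfolding inj_on_def W_def pr_def by auto
      have ar: "(pr a, pr b) \<in> A" if "a \<in> W" "b \<in> W" "(a, b) \<in> stA V A N" for a b
        using that(3)
      proof (cases rule: stA_cases)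
        case (in_copy g1 u1 v1) then show ?thesis unfolding pr_def by simp
      next
        case (to_S g1 v1) then show ?thesis using that(2) unfolding W_def by auto
      qed
      have P': "dipath A (map pr P) (pr x) (pr y)" by (rule dipath_pull[OF P PW ij ar])
      have Q': "dipath A (map pr Q) (pr x) (pr y)" by (rule dipath_pull[OF Q QW ij ar])
      have "map pr P \<noteq> map pr Q" by (rule map_pull_ne[OF PW QW ij ne])
      moreover have "interior (map pr P) \<inter> interior (map pr Q) = {}"
        by (rule map_pull_dis[OF PW QW ij d])
      ultimately show False using n P' Q' unfolding no2sp_def by auto
    qed
  qed
qed




lemma dipath_empty: "\<not> dipath {} P x y"
proof
  assume d: "dipath {} P x y"
  have "length P \<ge> 2" using d unfolding dipath_def by simp
  then have "Suc 0 < length P" by simp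
  from dipath_arc[OF d this] show False by simp
qed

lemma levels: "\<exists>(V :: nat set) A. digraph V A \<and> \<not> colourable V A k \<and> no2sp A"
proof (induction k)
  case 0
  have "digraph {0::nat} {}" unfolding digraph_def by simp
  moreover have "\<not> colourable {0::nat} {} 0" unfolding colourable_def by simp
  moreover have "no2sp ({} :: (nat \<times> nat) set)" unfolding no2sp_def by (simp add: dipath_empty)
  ultimately show ?case by (intro exI[of _ "{0::nat}"] exI[of _ "{} :: (nat \<times> nat) set"] conjI)
next
  case (Suc k)
  then obtain V :: "nat set" and A where dg: "digraph V A" and nc: "\<not> colourable V A k"
    and n2: "no2sp A" by auto
  define N where "N = Suc k * card V"
  have dg': "digraph (stV V N) (stA V A N)" by (rule step_digraph[OF dg])
  have nc': "\<not> colourable (stV V N) (stA V A N) (Suc k)" by (rule step_col[OF dg nc N_def])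
  have n2': "no2sp (stA V A N)" by (rule step_no2sp[OF n2])
  have "finite (stV V N)" using dg' unfolding digraph_def by simp
  then obtain h :: "sv \<Rightarrow> nat" where h: "inj_on h (stV V N)" by (rule to_nat)
  have 1: "digraph (h ` stV V N) (map_prod h h ` stA V A N)" by (rule tr_digraph[OF h dg'])
  have 2: "\<not> colourable (h ` stV V N) (map_prod h h ` stA V A N) (Suc k)"
  proof
    assume X: "colourable (h ` stV V N) (map_prod h h ` stA V A N) (Suc k)"
    from tr_col[OF h dg' X] nc' show False by simp
  qed
  have 3: "no2sp (map_prod h h ` stA V A N)" by (rule tr_no2sp[OF h dg' n2'])
  show ?case using 1 2 3 by (intro exI[of _ "h ` stV V N"] exI[of _ "map_prod h h ` stA V A N"] conjI)
qed

datatype fv = Dv nat | Bv nat | Av nat | Zv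

fun undv :: "fv \<Rightarrow> nat" where "undv (Dv a) = a" | "undv _ = 0"

definition fV :: "nat set \<Rightarrow> nat \<Rightarrow> fv set" where
  "fV V m = Dv ` V \<union> Bv ` {..m} \<union> Av ` {..m} \<union> {Zv}"

definition fA :: "(nat \<times> nat) set \<Rightarrow> nat set \<Rightarrow> nat \<Rightarrow> (fv \<times> fv) set" where
  "fA A V m = (\<lambda>(u, v). (Dv u, Dv v)) ` A \<union> (\<lambda>v. (Dv v, Bv v)) ` V \<union> (\<lambda>v. (Av v, Dv v)) ` V
     \<union> (\<lambda>i. (Bv (Suc i), Bv i)) ` {..<m} \<union> (\<lambda>i. (Av i, Av (Suc i))) ` {..<m}
     \<union> {(Bv 0, Zv), (Zv, Av 0)}"

lemma out_Av: "(Av i, w) \<in> fA A V m \<Longrightarrow> w = Av (Suc i) \<or> w = Dv i"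
  unfolding fA_def by auto
lemma out_Bv: "(Bv i, w) \<in> fA A V m \<Longrightarrow> w = (if i = 0 then Zv else Bv (i - 1))"
  unfolding fA_def by auto
lemma out_Zv: "(Zv, w) \<in> fA A V m \<Longrightarrow> w = Av 0"
  unfolding fA_def by auto
lemma out_Dv: "(Dv a, w) \<in> fA A V m \<Longrightarrow> (\<exists>b. w = Dv b \<and> (a, b) \<in> A) \<or> w = Bv a"
  unfolding fA_def by auto
lemma in_Av: "(w, Av i) \<in> fA A V m \<Longrightarrow> w = (if i = 0 then Zv else Av (i - 1))"
  unfolding fA_def by auto
lemma in_Bv: "(w, Bv i) \<in> fA A V m \<Longrightarrow> w = Bv (Suc i) \<or> w = Dv i"
  unfolding fA_def by auto
lemma in_Zv: "(w, Zv) \<in> fA A V m \<Longrightarrow> w = Bv 0"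
  unfolding fA_def by auto




context
  fixes V :: "nat set" and A :: "(nat \<times> nat) set" and m :: nat
  assumes dg: "digraph V A" and Vm: "V \<subseteq> {..m}"
begin

private lemma AV5: "A \<subseteq> V \<times> V" using dg unfolding digraph_def by simp

lemma fin_digraph: "digraph (fV V m) (fA A V m)"
proof -
  have f: "finite (fV V m)" using dg unfolding digraph_def fV_def by simp
  have s: "fA A V m \<subseteq> fV V m \<times> fV V m"
    using AV5 Vm unfolding fA_def fV_def by auto
  have l: "\<forall>v. (v, v) \<notin> fA A V m"
    using dg unfolding fA_def digraph_def by auto
  show ?thesis unfolding digraph_def using f s l by simp
qed

lemma fin_col: "colourable (fV V m) (fA A V m) j \<Longrightarrow> colourable V A j"
proof -
  assume "colourable (fV V m) (fA A V m) j"
  then obtain c :: "fv \<Rightarrow> nat" where c1: "c ` fV V m \<subseteq> {..<j}"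
    and c2: "\<forall>(a, b) \<in> fA A V m. c a \<noteq> c b" unfolding colourable_def by auto
  have "(c \<circ> Dv) ` V \<subseteq> {..<j}" using c1 unfolding fV_def by auto
  moreover have "\<forall>(a, b) \<in> A. (c \<circ> Dv) a \<noteq> (c \<circ> Dv) b"
  proof (intro ballI)
    fix e assume e: "e \<in> A"
    obtain a b where ab: "e = (a, b)" by (cases e)
    have "(Dv a, Dv b) \<in> fA A V m" using e ab unfolding fA_def by auto
    then have "c (Dv a) \<noteq> c (Dv b)" using c2 by auto
    then show "case e of (a, b) \<Rightarrow> (c \<circ> Dv) a \<noteq> (c \<circ> Dv) b" using ab by simp
  qed
  ultimately show ?thesis unfolding colourable_def by (intro exI[of _ "c \<circ> Dv"] conjI)
qed

lemma fin_strong: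
  assumes mV: "m \<in> V"
  shows "strongly_connected (fV V m) (fA A V m)"
proof -
  let ?R = "fA A V m"
  have Bc: "i + d \<le> m \<Longrightarrow> (Bv (i + d), Bv i) \<in> ?R\<^sup>*" for i d
  proof (induction d)
    case 0 then show ?case by simp
  next
    case (Suc d)
    then have "i + d \<in> {..<m}" by simp
    then have "(Bv (Suc (i + d)), Bv (i + d)) \<in> ?R" unfolding fA_def by auto
    moreover have "(Bv (i + d), Bv i) \<in> ?R\<^sup>*" using Suc by simp
    ultimately show ?case by (simp add: converse_rtrancl_into_rtrancl)
  qed
  have Ac: "i + d \<le> m \<Longrightarrow> (Av i, Av (i + d)) \<in> ?R\<^sup>*" for i d
  proof (induction d)
    case 0 then show ?case by simp
  next
    case (Suc d)
    then have "i + d \<in> {..<m}" by simp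
    then have "(Av (i + d), Av (Suc (i + d))) \<in> ?R" unfolding fA_def by auto
    moreover have "(Av i, Av (i + d)) \<in> ?R\<^sup>*" using Suc by simp
    ultimately show ?case by (simp add: rtrancl_into_rtrancl)
  qed
  have B0Z: "(Bv 0, Zv) \<in> ?R" unfolding fA_def by simp
  have ZA0: "(Zv, Av 0) \<in> ?R" unfolding fA_def by simp
  have DB: "a \<in> V \<Longrightarrow> (Dv a, Bv a) \<in> ?R" for a unfolding fA_def by auto
  have AD: "a \<in> V \<Longrightarrow> (Av a, Dv a) \<in> ?R" for a unfolding fA_def by auto
  have BZ: "i \<le> m \<Longrightarrow> (Bv i, Zv) \<in> ?R\<^sup>*" for i
    using Bc[of 0 i] B0Z by (simp add: rtrancl_into_rtrancl)
  have ZA: "i \<le> m \<Longrightarrow> (Zv, Av i) \<in> ?R\<^sup>*" for i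
    using Ac[of 0 i] ZA0 by (simp add: converse_rtrancl_into_rtrancl)
  have DZ: "a \<in> V \<Longrightarrow> (Dv a, Zv) \<in> ?R\<^sup>*" for a
    using DB BZ Vm by (meson atMost_iff converse_rtrancl_into_rtrancl subsetD)
  have ZD: "a \<in> V \<Longrightarrow> (Zv, Dv a) \<in> ?R\<^sup>*" for a
    using AD ZA Vm by (meson atMost_iff rtrancl_into_rtrancl subsetD)
  have AZ: "i \<le> m \<Longrightarrow> (Av i, Zv) \<in> ?R\<^sup>*" for i
  proof -
    assume i: "i \<le> m"
    have "(Av i, Av m) \<in> ?R\<^sup>*" using Ac[of i "m - i"] i by simp
    moreover have "(Av m, Zv) \<in> ?R\<^sup>*" using AD[OF mV] DZ[OF mV] by (rule converse_rtrancl_into_rtrancl)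
    ultimately show ?thesis by (rule rtrancl_trans)
  qed
  have ZB: "i \<le> m \<Longrightarrow> (Zv, Bv i) \<in> ?R\<^sup>*" for i
  proof -
    assume i: "i \<le> m"
    have "(Bv m, Bv i) \<in> ?R\<^sup>*" using Bc[of i "m - i"] i by simp
    then have "(Dv m, Bv i) \<in> ?R\<^sup>*" using DB[OF mV] by (rule converse_rtrancl_into_rtrancl[rotated])
    then show ?thesis using ZD[OF mV] by (rule rtrancl_trans[rotated])
  qed
  have toZ: "u \<in> fV V m \<Longrightarrow> (u, Zv) \<in> ?R\<^sup>*" for u
    unfolding fV_def using DZ BZ AZ by auto
  have fromZ: "u \<in> fV V m \<Longrightarrow> (Zv, u) \<in> ?R\<^sup>*" for u
    unfolding fV_def using ZD ZB ZA by auto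
  show ?thesis unfolding strongly_connected_def
  proof (intro ballI)
    fix x y assume "x \<in> fV V m" "y \<in> fV V m"
    then show "(x, y) \<in> ?R\<^sup>*" using toZ fromZ by (meson rtrancl_trans)
  qed
qed

end



lemma undv_inj: "inj_on undv (range Dv)" unfolding inj_on_def by auto

lemma D_or_Z:
  assumes d: "dipath (fA A V m) P (Dv a) (Dv b)"
  shows "Zv \<in> interior P \<or> (\<exists>P0. P = map Dv P0 \<and> dipath A P0 a b)"
proof (cases "Zv \<in> interior P")
  case True then show ?thesis by simp
next
  case False
  then have nz: "Zv \<notin> interior P" .
  have nzs: "Zv \<notin> set P" using nz interior_mem[OF d] by auto
  have bv: "\<forall>l. j \<le> l \<longrightarrow> l < length P \<longrightarrow> P ! l \<in> range Bv" if j: "P ! j \<in> range Bv" for j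
  proof (intro allI)
    fix l show "j \<le> l \<longrightarrow> l < length P \<longrightarrow> P ! l \<in> range Bv"
    proof (induction l)
      case 0 then show ?case using j by auto
    next
      case (Suc l)
      show ?case
      proof (intro impI)
        assume a: "j \<le> Suc l" "Suc l < length P"
        show "P ! Suc l \<in> range Bv"
        proof (cases "j = Suc l")
          case True then show ?thesis using j by simp
        next
          case False
          then have "P ! l \<in> range Bv" using Suc a by simp
          then obtain c where c: "P ! l = Bv c" by auto
          have "(P ! l, P ! Suc l) \<in> fA A V m" using dipath_arc[OF d a(2)] .
          then have e: "P ! Suc l = (if c = 0 then Zv else Bv (c - 1))" using c out_Bv by metis
          have "P ! Suc l \<noteq> Zv" using nzs nth_mem[OF a(2)] by metis
          then show ?thesis using e by (cases "c = 0") auto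
        qed
      qed
    qed
  qed
  have lP: "length P \<ge> 2" using d unfolding dipath_def by simp
  have last: "P ! (length P - 1) = Dv b" using dipath_nthlast[OF d] .
  have allD: "\<forall>j. j < length P \<longrightarrow> P ! j \<in> range Dv"
  proof (intro allI)
    fix j show "j < length P \<longrightarrow> P ! j \<in> range Dv"
    proof (induction j)
      case 0 then show ?case using dipath_nth0[OF d] by simp
    next
      case (Suc j)
      show ?case
      proof
        assume a: "Suc j < length P"
        then obtain c where c: "P ! j = Dv c" using Suc by auto
        have "(P ! j, P ! Suc j) \<in> fA A V m" using dipath_arc[OF d a] .
        then have "(\<exists>b'. P ! Suc j = Dv b') \<or> P ! Suc j = Bv c" using c out_Dv by metis
        moreover have "P ! Suc j \<noteq> Bv c"
        proof
          assume "P ! Suc j = Bv c"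
          then have "P ! Suc j \<in> range Bv" by simp
          then have "P ! (length P - 1) \<in> range Bv" using bv[of "Suc j"] a lP by simp
          then show False using last by auto
        qed
        ultimately show "P ! Suc j \<in> range Dv" by auto
      qed
    qed
  qed
  have sW: "set P \<subseteq> range Dv"
  proof
    fix z assume "z \<in> set P"
    then obtain i where "i < length P" "P ! i = z" by (auto simp: in_set_conv_nth)
    then show "z \<in> range Dv" using allD by auto
  qed
  have ar: "(undv u, undv v) \<in> A" if uu: "u \<in> range Dv" and vv: "v \<in> range Dv"
    and ee: "(u, v) \<in> fA A V m" for u v
  proof -
    obtain x where x: "u = Dv x" using uu by auto
    obtain y where y: "v = Dv y" using vv by auto
    have "(\<exists>b'. Dv y = Dv b' \<and> (x, b') \<in> A) \<or> Dv y = Bv x" using out_Dv ee x y by metis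
    then show ?thesis using x y by auto
  qed
  have "dipath A (map undv P) (undv (Dv a)) (undv (Dv b))"
    by (rule dipath_pull[OF d sW undv_inj ar])
  then have 1: "dipath A (map undv P) a b" by simp
  have 2: "map Dv (map undv P) = P" unfolding map_map
  proof (rule map_idI)
    fix z assume "z \<in> set P"
    then obtain c where "z = Dv c" using sW by auto
    then show "(Dv \<circ> undv) z = z" by simp
  qed
  show ?thesis
  proof (rule disjI2, rule exI[of _ "map undv P"])
    show "P = map Dv (map undv P) \<and> dipath A (map undv P) a b" using 1 2 by simp
  qed
qed

lemma two_D:
  assumes n: "no2sp A" and P: "dipath A P0 a b" and Q: "dipath A Q0 a b"
    and d: "interior (map Dv P0) \<inter> interior (map Dv Q0) = {}"
  shows "map Dv P0 = map Dv Q0"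
proof (rule ccontr)
  assume ne: "map Dv P0 \<noteq> map Dv Q0"
  then have ne0: "P0 \<noteq> Q0" by auto
  have "interior P0 \<inter> interior Q0 = {}"
    using d unfolding interior_map by (auto simp: disjoint_iff)
  then show False using n P Q ne0 unfolding no2sp_def by auto
qed




lemma two_noZ:
  assumes n: "no2sp A" and P: "dipath (fA A V m) P (Dv a) (Dv b)" and Q: "dipath (fA A V m) Q (Dv a) (Dv b)"
    and ne: "P \<noteq> Q" and d: "interior P \<inter> interior Q = {}"
    and zP: "Zv \<notin> interior P" and zQ: "Zv \<notin> interior Q"
  shows False
proof -
  obtain P0 where P0: "P = map Dv P0" "dipath A P0 a b" using D_or_Z[OF P] zP by auto
  obtain Q0 where Q0: "Q = map Dv Q0" "dipath A Q0 a b" using D_or_Z[OF Q] zQ by auto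
  have "map Dv P0 = map Dv Q0" using two_D[OF n P0(2) Q0(2)] d P0(1) Q0(1) by simp
  then show False using ne P0(1) Q0(1) by simp
qed

lemma fin_nospindle:
  assumes n: "no2sp A" shows "\<not> has_spindle (fV V m) (fA A V m) 3"
proof
  let ?R = "fA A V m"
  assume "has_spindle (fV V m) ?R 3"
  then obtain x y and P :: "nat \<Rightarrow> fv list" where pa: "\<forall>i<3. dipath ?R (P i) x y"
    and di: "\<forall>i<3. \<forall>j<3. i \<noteq> j \<longrightarrow> P i \<noteq> P j \<and> interior (P i) \<inter> interior (P j) = {}"
    unfolding has_spindle_def by auto
  have d: "dipath ?R (P i) x y" if "i < 3" for i using pa that by simp
  have ne: "P i \<noteq> P j" and dis: "interior (P i) \<inter> interior (P j) = {}"
    if "i < 3" "j < 3" "i \<noteq> j" for i j using di that by auto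
  have s: "P i ! 1 \<noteq> P j ! 1" if "i < 3" "j < 3" "i \<noteq> j" for i j
    using second_distinct[OF d[OF that(1)] d[OF that(2)] ne[OF that] dis[OF that]] .
  have t: "P i ! (length (P i) - 2) \<noteq> P j ! (length (P j) - 2)" if "i < 3" "j < 3" "i \<noteq> j" for i j
    using penult_distinct[OF d[OF that(1)] d[OF that(2)] ne[OF that] dis[OF that]] .
  have so: "(x, P i ! 1) \<in> ?R" if "i < 3" for i using dipath_first_arc[OF d[OF that]] .
  have ti: "(P i ! (length (P i) - 2), y) \<in> ?R" if "i < 3" for i using dipath_last_arc[OF d[OF that]] .
  have i3: "(0::nat) < 3" "(1::nat) < 3" "(2::nat) < 3" by simp_all
  have s01: "P 0 ! 1 \<noteq> P 1 ! 1" and s02: "P 0 ! 1 \<noteq> P 2 ! 1" and s12: "P 1 ! 1 \<noteq> P 2 ! 1"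
    using s[of 0 1] s[of 0 2] s[of 1 2] by simp_all
  have t01: "P 0 ! (length (P 0) - 2) \<noteq> P 1 ! (length (P 1) - 2)"
    and t02: "P 0 ! (length (P 0) - 2) \<noteq> P 2 ! (length (P 2) - 2)"
    and t12: "P 1 ! (length (P 1) - 2) \<noteq> P 2 ! (length (P 2) - 2)"
    using t[of 0 1] t[of 0 2] t[of 1 2] by simp_all
  obtain a where xa: "x = Dv a"
  proof (cases x)
    case (Dv a) then show ?thesis using that by simp
  next
    case (Bv i)
    then have "P 0 ! 1 = (if i = 0 then Zv else Bv (i - 1))" "P 1 ! 1 = (if i = 0 then Zv else Bv (i - 1))"
      using out_Bv so[OF i3(1)] so[OF i3(2)] by metis+
    then show ?thesis using s01 by simp
  next
    case (Av i)
    then have "P 0 ! 1 = Av (Suc i) \<or> P 0 ! 1 = Dv i" "P 1 ! 1 = Av (Suc i) \<or> P 1 ! 1 = Dv i"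
      "P 2 ! 1 = Av (Suc i) \<or> P 2 ! 1 = Dv i"
      using out_Av so[OF i3(1)] so[OF i3(2)] so[OF i3(3)] by metis+
    then show ?thesis using s01 s02 s12 by auto
  next
    case Zv
    then have "P 0 ! 1 = Av 0" "P 1 ! 1 = Av 0" using out_Zv so[OF i3(1)] so[OF i3(2)] by metis+
    then show ?thesis using s01 by simp
  qed
  obtain b where yb: "y = Dv b"
  proof (cases y)
    case (Dv b) then show ?thesis using that by simp
  next
    case (Av i)
    then have "P 0 ! (length (P 0) - 2) = (if i = 0 then Zv else Av (i - 1))"
      "P 1 ! (length (P 1) - 2) = (if i = 0 then Zv else Av (i - 1))"
      using in_Av ti[OF i3(1)] ti[OF i3(2)] by metis+
    then show ?thesis using t01 by simp
  next
    case (Bv i)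
    then have "P 0 ! (length (P 0) - 2) = Bv (Suc i) \<or> P 0 ! (length (P 0) - 2) = Dv i"
      "P 1 ! (length (P 1) - 2) = Bv (Suc i) \<or> P 1 ! (length (P 1) - 2) = Dv i"
      "P 2 ! (length (P 2) - 2) = Bv (Suc i) \<or> P 2 ! (length (P 2) - 2) = Dv i"
      using in_Bv ti[OF i3(1)] ti[OF i3(2)] ti[OF i3(3)] by metis+
    then show ?thesis using t01 t02 t12 by auto
  next
    case Zv
    then have "P 0 ! (length (P 0) - 2) = Bv 0" "P 1 ! (length (P 1) - 2) = Bv 0"
      using in_Zv ti[OF i3(1)] ti[OF i3(2)] by metis+
    then show ?thesis using t01 by simp
  qed
  have dd: "dipath ?R (P i) (Dv a) (Dv b)" if "i < 3" for i using d[OF that] xa yb by simp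
  have nz: "Zv \<in> interior (P i)" if "i < 3" "j < 3" "i \<noteq> j" "Zv \<notin> interior (P j)" for i j
  proof (rule ccontr)
    assume "Zv \<notin> interior (P i)"
    then show False using two_noZ[OF n dd[OF that(1)] dd[OF that(2)] ne[OF that(1-3)] dis[OF that(1-3)]] that(4)
      by simp
  qed
  have z2: "Zv \<notin> interior (P i) \<or> Zv \<notin> interior (P j)" if "i < 3" "j < 3" "i \<noteq> j" for i j
    using dis[OF that] by auto
  show False
  proof (cases "Zv \<in> interior (P 0)")
    case True
    then have "Zv \<notin> interior (P 1)" using z2[of 0 1] by simp
    then have "Zv \<in> interior (P 2)" using nz[of 2 1] by simp
    then show False using True z2[of 0 2] by simp
  next
    case False
    then have "Zv \<in> interior (P 1)" "Zv \<in> interior (P 2)" using nz[of 1 0] nz[of 2 0] by simp_all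
    then show False using z2[of 1 2] by simp
  qed
qed

lemma fin_nobispindle:
  assumes n: "no2sp A" shows "\<not> has_bispindle (fV V m) (fA A V m) 2 2"
proof
  let ?R = "fA A V m"
  assume "has_bispindle (fV V m) ?R 2 2"
  then obtain x y and P :: "nat \<Rightarrow> fv list" where pa: "\<forall>i<2. dipath ?R (P i) x y"
    and pb: "\<forall>i. 2 \<le> i \<and> i < 2 + 2 \<longrightarrow> dipath ?R (P i) y x"
    and di: "\<forall>i<2+2. \<forall>j<2+2. i \<noteq> j \<longrightarrow> P i \<noteq> P j \<and> interior (P i) \<inter> interior (P j) = {}"
    unfolding has_bispindle_def by auto
  have d0: "dipath ?R (P 0) x y" and d1: "dipath ?R (P 1) x y" using pa by simp_all
  have d2: "dipath ?R (P 2) y x" and d3: "dipath ?R (P 3) y x" using pb by simp_all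
  have ne: "P i \<noteq> P j" and dis: "interior (P i) \<inter> interior (P j) = {}"
    if "i < 4" "j < 4" "i \<noteq> j" for i j using di that by auto
  have s01: "P 0 ! 1 \<noteq> P 1 ! 1" using second_distinct[OF d0 d1 ne[of 0 1] dis[of 0 1]] by simp
  have s23: "P 2 ! 1 \<noteq> P 3 ! 1" using second_distinct[OF d2 d3 ne[of 2 3] dis[of 2 3]] by simp
  have t01: "P 0 ! (length (P 0) - 2) \<noteq> P 1 ! (length (P 1) - 2)"
    using penult_distinct[OF d0 d1 ne[of 0 1] dis[of 0 1]] by simp
  have t23: "P 2 ! (length (P 2) - 2) \<noteq> P 3 ! (length (P 3) - 2)"
    using penult_distinct[OF d2 d3 ne[of 2 3] dis[of 2 3]] by simp
  have a0: "(x, P 0 ! 1) \<in> ?R" using dipath_first_arc[OF d0] .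
  have a1: "(x, P 1 ! 1) \<in> ?R" using dipath_first_arc[OF d1] .
  have a2: "(y, P 2 ! 1) \<in> ?R" using dipath_first_arc[OF d2] .
  have a3: "(y, P 3 ! 1) \<in> ?R" using dipath_first_arc[OF d3] .
  have b0: "(P 0 ! (length (P 0) - 2), y) \<in> ?R" using dipath_last_arc[OF d0] .
  have b1: "(P 1 ! (length (P 1) - 2), y) \<in> ?R" using dipath_last_arc[OF d1] .
  have b2: "(P 2 ! (length (P 2) - 2), x) \<in> ?R" using dipath_last_arc[OF d2] .
  have b3: "(P 3 ! (length (P 3) - 2), x) \<in> ?R" using dipath_last_arc[OF d3] .
  have isD: "\<exists>c. z = Dv c" if o1: "(z, u1) \<in> ?R" and o2: "(z, u2) \<in> ?R" and u: "u1 \<noteq> u2"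
    and i1: "(w1, z) \<in> ?R" and i2: "(w2, z) \<in> ?R" and w: "w1 \<noteq> w2" for z u1 u2 w1 w2
  proof (cases z)
    case (Dv c) then show ?thesis by simp
  next
    case (Bv i)
    then have "u1 = (if i = 0 then Zv else Bv (i - 1))" "u2 = (if i = 0 then Zv else Bv (i - 1))"
      using out_Bv o1 o2 by metis+
    then show ?thesis using u by simp
  next
    case (Av i)
    then have "w1 = (if i = 0 then Zv else Av (i - 1))" "w2 = (if i = 0 then Zv else Av (i - 1))"
      using in_Av i1 i2 by metis+
    then show ?thesis using w by simp
  next
    case Zv
    then have "u1 = Av 0" "u2 = Av 0" using out_Zv o1 o2 by metis+
    then show ?thesis using u by simp
  qed
  obtain a where xa: "x = Dv a" using isD[OF a0 a1 s01 b2 b3 t23] by auto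
  obtain b where yb: "y = Dv b" using isD[OF a2 a3 s23 b0 b1 t01] by auto
  have z01: "Zv \<in> interior (P 0) \<or> Zv \<in> interior (P 1)"
  proof (rule ccontr)
    assume "\<not> (Zv \<in> interior (P 0) \<or> Zv \<in> interior (P 1))"
    then show False
      using two_noZ[OF n, where P="P 0" and Q="P 1" and a=a and b=b] d0 d1 xa yb ne[of 0 1] dis[of 0 1] by simp
  qed
  have z23: "Zv \<in> interior (P 2) \<or> Zv \<in> interior (P 3)"
  proof (rule ccontr)
    assume "\<not> (Zv \<in> interior (P 2) \<or> Zv \<in> interior (P 3))"
    then show False
      using two_noZ[OF n, where P="P 2" and Q="P 3" and a=b and b=a] d2 d3 xa yb ne[of 2 3] dis[of 2 3] by simp
  qed
  show False
    using z01 z23 dis[of 0 2] dis[of 0 3] dis[of 1 2] dis[of 1 3] by auto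
qed




lemma chrom_gt:
  assumes dg: "digraph X B" and nc: "\<not> colourable X B j"
  shows "chromatic_number X B > j"
proof -
  have fX: "finite X" and BX: "B \<subseteq> X \<times> X" and nl: "\<forall>v. (v, v) \<notin> B"
    using dg unfolding digraph_def by auto
  obtain f :: "'a \<Rightarrow> nat" and n where f: "f ` X = {i. i < n}" "inj_on f X"
    using finite_imp_inj_to_nat_seg[OF fX] by auto
  have "colourable X B n" unfolding colourable_def
  proof (intro exI[of _ f] conjI)
    show "f ` X \<subseteq> {..<n}" using f(1) by auto
    show "\<forall>(u, v)\<in>B. f u \<noteq> f v"
    proof (intro ballI)
      fix e assume e: "e \<in> B"
      obtain u v where uv: "e = (u, v)" by (cases e)
      have "u \<in> X" "v \<in> X" "u \<noteq> v" using e uv BX nl by auto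
      then have "f u \<noteq> f v" using f(2) by (meson inj_on_contraD)
      then show "case e of (u, v) \<Rightarrow> f u \<noteq> f v" using uv by simp
    qed
  qed
  then have c: "colourable X B (chromatic_number X B)"
    unfolding chromatic_number_def by (rule LeastI)
  show ?thesis
  proof (rule ccontr)
    assume "\<not> j < chromatic_number X B"
    then have "chromatic_number X B \<le> j" by simp
    then have "colourable X B j" using colourable_mono[OF c] by simp
    then show False using nc by simp
  qed
qed

theorem mainTheorem1:
  fixes k :: int
  shows "\<exists>(V :: nat set) (A :: (nat \<times> nat) set).
           digraph V A \<and> strongly_connected V A \<and> int (chromatic_number V A) > k \<and>
           \<not> has_spindle V A 3 \<and> \<not> has_bispindle V A 2 2"
proof -
  obtain V :: "nat set" and A where dg: "digraph V A" and nc: "\<not> colourable V A (nat k)"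
    and n2: "no2sp A" using levels[of "nat k"] by auto
  have fV0: "finite V" and AV5: "A \<subseteq> V \<times> V" using dg unfolding digraph_def by auto
  have Vne: "V \<noteq> {}"
  proof
    assume "V = {}"
    then have "A = {}" using AV5 by auto
    then have "colourable V A (nat k)" unfolding colourable_def using \<open>V = {}\<close> by simp
    then show False using nc by simp
  qed
  define m where "m = Max V"
  have mV: "m \<in> V" unfolding m_def using fV0 Vne by (rule Max_in)
  have Vm: "V \<subseteq> {..m}" unfolding m_def using fV0 by auto
  let ?W = "fV V m" and ?R = "fA A V m"
  have dW: "digraph ?W ?R" by (rule fin_digraph[OF dg Vm])
  have sW: "strongly_connected ?W ?R" by (rule fin_strong[OF dg Vm mV])
  have cW: "\<not> colourable ?W ?R (nat k)"
  proof
    assume "colourable ?W ?R (nat k)"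
    from fin_col[OF dg Vm this] nc show False by simp
  qed
  have pW: "\<not> has_spindle ?W ?R 3" by (rule fin_nospindle[OF n2])
  have bW: "\<not> has_bispindle ?W ?R 2 2" by (rule fin_nobispindle[OF n2])
  have "finite ?W" using dW unfolding digraph_def by simp
  then obtain h :: "fv \<Rightarrow> nat" where h: "inj_on h ?W" by (rule to_nat)
  let ?V' = "h ` ?W" and ?A' = "map_prod h h ` ?R"
  have 1: "digraph ?V' ?A'" by (rule tr_digraph[OF h dW])
  have 2: "strongly_connected ?V' ?A'" by (rule tr_strong[OF h dW sW])
  have 3: "\<not> colourable ?V' ?A' (nat k)"
  proof
    assume "colourable ?V' ?A' (nat k)"
    from tr_col[OF h dW this] cW show False by simp
  qed
  have 4: "\<not> has_spindle ?V' ?A' 3"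
  proof
    assume "has_spindle ?V' ?A' 3"
    from tr_spindle[OF h dW this] pW show False by simp
  qed
  have 5: "\<not> has_bispindle ?V' ?A' 2 2"
  proof
    assume "has_bispindle ?V' ?A' 2 2"
    from tr_bispindle[OF h dW this] bW show False by simp
  qed
  have "chromatic_number ?V' ?A' > nat k" by (rule chrom_gt[OF 1 3])
  then have 6: "int (chromatic_number ?V' ?A') > k" by linarith
  show ?thesis using 1 2 4 5 6 by (intro exI[of _ ?V'] exI[of _ ?A'] conjI)
qed



end
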